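(* For $1\le\ell\le n$ let $s_{n,\ell}$ be the number of permutations $\sigma$ of $\{1,\dots,n\}$ avoiding both $1324$ and $2134$ with $\sigma(n)=\ell$. Then $h(x,u)=\sum_{n=1}^\infty\sum_{\ell=1}^n s_{n,\ell}u^\ell x^n$ is given by \[ h(x,u)=\frac{2ux(1-u)(1-ux)+ux\big(1-u(1-u)x\big)\big(1-x-\sqrt{1-6x+x^2}\big)}{2\big(1-u(1+x)+2u^2x\big)}. \] In particular, \[ h(x,1)=\frac{1-x-\sqrt{1-6x+x^2}}{2}, \] so the number of permutations of $\{1,\dots,n\}$ avoiding $1324$ and $2134$ is the $n$-th large Schröder number.
   Context: A permutation avoids a pattern $p$ if no subsequence of its one-line notation is order-isomorphic to $p$. The large Schröder numbers $1,2,6,22,90,\dots$ (for $n=1,2,\dots$) have generating function $\frac{1-x-\sqrt{1-6x+x^2}}{2}$ without constant term. *)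

theory Defs
  imports "HOL-Computational_Algebra.Computational_Algebra"
          "HOL-Combinatorics.Permutations"
begin

definition contains_pattern :: "(nat \<Rightarrow> nat) \<Rightarrow> nat \<Rightarrow> nat list \<Rightarrow> bool" where
  "contains_pattern \<sigma> n p \<longleftrightarrow>
     (\<exists>is. length is = length p \<and> sorted_wrt (<) is \<and> set is \<subseteq> {1..n} \<and>
        (\<forall>a<length p. \<forall>b<length p. \<sigma> (is ! a) < \<sigma> (is ! b) \<longleftrightarrow> p ! a < p ! b))"

definition avoids :: "(nat \<Rightarrow> nat) \<Rightarrow> nat \<Rightarrow> nat list \<Rightarrow> bool" where
  "avoids \<sigma> n p \<longleftrightarrow> \<not> contains_pattern \<sigma> n p"

definition av_perms :: "nat \<Rightarrow> (nat \<Rightarrow> nat) set" where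
  "av_perms n = {\<sigma>. \<sigma> permutes {1..n} \<and> avoids \<sigma> n [1,3,2,4] \<and> avoids \<sigma> n [2,1,3,4]}"

definition s :: "nat \<Rightarrow> nat \<Rightarrow> nat" where
  "s n l = card {\<sigma> \<in> av_perms n. \<sigma> n = l}"

definition u_var :: "real poly fract" where
  "u_var = to_fract [:0, 1:]"

text \<open>h(x,u) as a formal power series in x whose coefficients are (polynomials in) u.\<close>
definition h_fps :: "real poly fract fps" where
  "h_fps = Abs_fps (\<lambda>n. \<Sum>l=1..n. of_nat (s n l) * u_var ^ l)"

definition sqrt_fps :: "real fps" where
  "sqrt_fps = fps_radical (\<lambda>k c. root k c) 2 (1 - 6 * fps_X + fps_X ^ 2)"

definition sqrt_fps_u :: "real poly fract fps" where
  "sqrt_fps_u = Abs_fps (\<lambda>n. to_fract [:sqrt_fps $ n:])"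

end

theory Submission
  imports Defs
begin


lemma all4: "(\<forall>a<(4::nat). P a) \<longleftrightarrow> P 0 \<and> P 1 \<and> P 2 \<and> P 3"
  by (auto simp: less_Suc_eq numeral_eq_Suc)

lemma contains4:
  assumes "length p = 4"
  shows "contains_pattern \<sigma> n p \<longleftrightarrow> (\<exists>i1 i2 i3 i4. 1 \<le> i1 \<and> i1 < i2 \<and> i2 < i3 \<and> i3 < i4 \<and> i4 \<le> n \<and>
     (\<forall>a<4. \<forall>b<4. \<sigma> ([i1,i2,i3,i4] ! a) < \<sigma> ([i1,i2,i3,i4] ! b) \<longleftrightarrow> p ! a < p ! b))"
proof
  assume "contains_pattern \<sigma> n p"
  then obtain js where js: "length js = length p" "sorted_wrt (<) js" "set js \<subseteq> {1..n}"
    "\<forall>a<length p. \<forall>b<length p. \<sigma> (js ! a) < \<sigma> (js ! b) \<longleftrightarrow> p ! a < p ! b"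
    unfolding contains_pattern_def by blast
  then have "length js = 4" using assms by simp
  then obtain a b c d where abcd: "js = [a, b, c, d]"
    by (auto simp: numeral_eq_Suc length_Suc_conv)
  show "\<exists>i1 i2 i3 i4. 1 \<le> i1 \<and> i1 < i2 \<and> i2 < i3 \<and> i3 < i4 \<and> i4 \<le> n \<and>
     (\<forall>a<4. \<forall>b<4. \<sigma> ([i1,i2,i3,i4] ! a) < \<sigma> ([i1,i2,i3,i4] ! b) \<longleftrightarrow> p ! a < p ! b)"
    apply (rule exI[of _ a], rule exI[of _ b], rule exI[of _ c], rule exI[of _ d])
    using js assms unfolding abcd by auto
next
  assume "\<exists>i1 i2 i3 i4. 1 \<le> i1 \<and> i1 < i2 \<and> i2 < i3 \<and> i3 < i4 \<and> i4 \<le> n \<and>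
     (\<forall>a<4. \<forall>b<4. \<sigma> ([i1,i2,i3,i4] ! a) < \<sigma> ([i1,i2,i3,i4] ! b) \<longleftrightarrow> p ! a < p ! b)"
  then obtain i1 i2 i3 i4 where i: "1 \<le> i1" "i1 < i2" "i2 < i3" "i3 < i4" "i4 \<le> n"
     "\<forall>a<4. \<forall>b<4. \<sigma> ([i1,i2,i3,i4] ! a) < \<sigma> ([i1,i2,i3,i4] ! b) \<longleftrightarrow> p ! a < p ! b" by blast
  show "contains_pattern \<sigma> n p" unfolding contains_pattern_def
    apply (rule exI[of _ "[i1,i2,i3,i4]"])
    using i assms by auto
qed

definition P4 :: "(nat \<Rightarrow> nat) \<Rightarrow> nat \<Rightarrow> bool" where
  "P4 \<sigma> n \<longleftrightarrow> (\<exists>i1 i2 i3 i4. 1 \<le> i1 \<and> i1 < i2 \<and> i2 < i3 \<and> i3 < i4 \<and> i4 \<le> n \<and>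
     ((\<sigma> i1 < \<sigma> i3 \<and> \<sigma> i3 < \<sigma> i2 \<and> \<sigma> i2 < \<sigma> i4) \<or> (\<sigma> i2 < \<sigma> i1 \<and> \<sigma> i1 < \<sigma> i3 \<and> \<sigma> i3 < \<sigma> i4)))"

lemma pat1324: fixes \<sigma> :: "nat \<Rightarrow> nat" shows "(\<forall>a<4. \<forall>b<4. \<sigma> ([i1,i2,i3,i4] ! a) < \<sigma> ([i1,i2,i3,i4] ! b) \<longleftrightarrow> [1,3,2,4::nat] ! a < [1,3,2,4::nat] ! b)
   \<longleftrightarrow> (\<sigma> i1 < \<sigma> i3 \<and> \<sigma> i3 < \<sigma> i2 \<and> \<sigma> i2 < \<sigma> i4)"
  unfolding all4 apply (simp add: numeral_2_eq_2 numeral_3_eq_3)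
  apply (intro iffI; (elim conjE)?; (intro conjI)?)
  apply linarith+
  done

lemma pat2134: fixes \<sigma> :: "nat \<Rightarrow> nat" shows "(\<forall>a<4. \<forall>b<4. \<sigma> ([i1,i2,i3,i4] ! a) < \<sigma> ([i1,i2,i3,i4] ! b) \<longleftrightarrow> [2,1,3,4::nat] ! a < [2,1,3,4::nat] ! b)
   \<longleftrightarrow> (\<sigma> i2 < \<sigma> i1 \<and> \<sigma> i1 < \<sigma> i3 \<and> \<sigma> i3 < \<sigma> i4)"
  unfolding all4 apply (simp add: numeral_2_eq_2 numeral_3_eq_3)
  apply (intro iffI; (elim conjE)?; (intro conjI)?)
  apply linarith+
  done

lemma c1324: fixes \<sigma> :: "nat \<Rightarrow> nat" shows "contains_pattern \<sigma> n [1,3,2,4] \<longleftrightarrow> (\<exists>i1 i2 i3 i4. 1 \<le> i1 \<and> i1 < i2 \<and> i2 < i3 \<and> i3 < i4 \<and> i4 \<le> n \<and>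
     (\<sigma> i1 < \<sigma> i3 \<and> \<sigma> i3 < \<sigma> i2 \<and> \<sigma> i2 < \<sigma> i4))"
  using contains4[of "[1,3,2,4]" \<sigma> n] by (simp only: pat1324) simp

lemma c2134: fixes \<sigma> :: "nat \<Rightarrow> nat" shows "contains_pattern \<sigma> n [2,1,3,4] \<longleftrightarrow> (\<exists>i1 i2 i3 i4. 1 \<le> i1 \<and> i1 < i2 \<and> i2 < i3 \<and> i3 < i4 \<and> i4 \<le> n \<and>
     (\<sigma> i2 < \<sigma> i1 \<and> \<sigma> i1 < \<sigma> i3 \<and> \<sigma> i3 < \<sigma> i4))"
  using contains4[of "[2,1,3,4]" \<sigma> n] by (simp only: pat2134) simp

lemma av_iff: "\<sigma> \<in> av_perms n \<longleftrightarrow> \<sigma> permutes {1..n} \<and> \<not> P4 \<sigma> n"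
  unfolding av_perms_def avoids_def c1324 c2134 P4_def by blast

definition sh :: "nat \<Rightarrow> nat \<Rightarrow> nat" where "sh l v = (if v < l then v else Suc v)"
lemma sh_less[simp]: "sh l a < sh l b \<longleftrightarrow> a < b" by (auto simp: sh_def)
lemma sh_eq[simp]: "sh l a = sh l b \<longleftrightarrow> a = b" by (auto simp: sh_def)
lemma sh_lt_l[simp]: "sh l v < l \<longleftrightarrow> v < l" by (auto simp: sh_def)
lemma sh_ne_l[simp]: "sh l v \<noteq> l" by (auto simp: sh_def)
lemma sh_ne_l2[simp]: "l \<noteq> sh l v" by (auto simp: sh_def)

definition snoc_p :: "(nat \<Rightarrow> nat) \<Rightarrow> nat \<Rightarrow> nat \<Rightarrow> nat \<Rightarrow> nat" where
  "snoc_p \<tau> n l = (\<lambda>i. if i = Suc n then l else if 1 \<le> i \<and> i \<le> n then sh l (\<tau> i) else i)"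
definition del_p :: "(nat \<Rightarrow> nat) \<Rightarrow> nat \<Rightarrow> nat \<Rightarrow> nat" where
  "del_p \<sigma> n = (\<lambda>i. if 1 \<le> i \<and> i \<le> n then (if \<sigma> i < \<sigma> (Suc n) then \<sigma> i else \<sigma> i - 1) else i)"

lemma snoc_in: "1 \<le> i \<Longrightarrow> i \<le> n \<Longrightarrow> snoc_p \<tau> n l i = sh l (\<tau> i)" by (simp add: snoc_p_def)
lemma snoc_last[simp]: "snoc_p \<tau> n l (Suc n) = l" by (simp add: snoc_p_def)

lemma perm_range: "\<tau> permutes {1..n} \<Longrightarrow> 1 \<le> i \<Longrightarrow> i \<le> n \<Longrightarrow> 1 \<le> \<tau> i \<and> \<tau> i \<le> n"
  using permutes_in_image[of \<tau> "{1..n}" i] by simp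
lemma perm_out: "\<tau> permutes S \<Longrightarrow> i \<notin> S \<Longrightarrow> \<tau> i = i" by (rule permutes_not_in)
lemma perm_inj: "\<tau> permutes S \<Longrightarrow> \<tau> i = \<tau> j \<Longrightarrow> i = j" using permutes_inj by (metis injD)
lemma perm_surj: "\<tau> permutes S \<Longrightarrow> v \<in> S \<Longrightarrow> \<exists>i\<in>S. \<tau> i = v" using permutes_image by (metis imageE)

lemma permI:
  fixes f :: "nat \<Rightarrow> nat" and m :: nat
  assumes "\<And>i. i \<in> {1..m} \<Longrightarrow> f i \<in> {1..m}" "inj_on f {1..m}" "\<And>i. i \<notin> {1..m} \<Longrightarrow> f i = i"
  shows "f permutes {1..m}"
proof (rule bij_imp_permutes)
  have sub: "f ` {1..m} \<subseteq> {1..m}" using assms(1) by auto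
  have "f ` {1..m} = {1..m}" using endo_inj_surj[of "{1..m}" f] sub assms(2) by simp
  then show "bij_betw f {1..m} {1..m}" using assms(2) by (simp add: bij_betw_def)
qed (use assms(3) in auto)

lemma snoc_perm:
  assumes p: "\<tau> permutes {1..n}" and l: "1 \<le> l" "l \<le> Suc n"
  shows "snoc_p \<tau> n l permutes {1..Suc n}"
proof (rule permI)
  fix i assume i: "i \<in> {1..Suc n}"
  show "snoc_p \<tau> n l i \<in> {1..Suc n}"
  proof (cases "i = Suc n")
    case True then show ?thesis using l by simp
  next
    case False
    then have "1 \<le> i" "i \<le> n" using i by auto
    then show ?thesis using perm_range[OF p, of i] by (auto simp: snoc_in sh_def)
  qed
next
  show "inj_on (snoc_p \<tau> n l) {1..Suc n}"
  proof (rule inj_onI)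
    fix i j assume i: "i \<in> {1..Suc n}" and j: "j \<in> {1..Suc n}" and e: "snoc_p \<tau> n l i = snoc_p \<tau> n l j"
    show "i = j"
    proof (cases "i = Suc n"; cases "j = Suc n")
      assume "i \<noteq> Suc n" "j \<noteq> Suc n"
      then have "1 \<le> i" "i \<le> n" "1 \<le> j" "j \<le> n" using i j by auto
      then show ?thesis using e perm_inj[OF p, of i j] by (simp add: snoc_in)
    next
      assume "i = Suc n" "j \<noteq> Suc n"
      then have "1 \<le> j" "j \<le> n" using j by auto
      then show ?thesis using e \<open>i = Suc n\<close> by (simp add: snoc_in)
    next
      assume "i \<noteq> Suc n" "j = Suc n"
      then have "1 \<le> i" "i \<le> n" using i by auto
      then show ?thesis using e \<open>j = Suc n\<close> by (simp add: snoc_in)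
    qed simp
  qed
next
  fix i assume "i \<notin> {1..Suc n}"
  then show "snoc_p \<tau> n l i = i" by (auto simp: snoc_p_def)
qed

lemma del_snoc:
  assumes p: "\<tau> permutes {1..n}"
  shows "del_p (snoc_p \<tau> n l) n = \<tau>"
proof
  fix i
  show "del_p (snoc_p \<tau> n l) n i = \<tau> i"
  proof (cases "1 \<le> i \<and> i \<le> n")
    case True then show ?thesis by (auto simp: del_p_def snoc_in sh_def)
  next
    case False then show ?thesis using perm_out[OF p, of i] by (auto simp: del_p_def)
  qed
qed

lemma del_perm_snoc:
  assumes p: "\<sigma> permutes {1..Suc n}"
  shows "del_p \<sigma> n permutes {1..n} \<and> snoc_p (del_p \<sigma> n) n (\<sigma> (Suc n)) = \<sigma>"
proof -
  define l where "l = \<sigma> (Suc n)"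
  have l: "1 \<le> l" "l \<le> Suc n" using perm_range[OF p, of "Suc n"] by (auto simp: l_def)
  have rng: "1 \<le> \<sigma> i \<and> \<sigma> i \<le> Suc n \<and> \<sigma> i \<noteq> l" if "1 \<le> i" "i \<le> n" for i
    using perm_range[OF p, of i] perm_inj[OF p, of i "Suc n"] that by (auto simp: l_def)
  have dp: "del_p \<sigma> n permutes {1..n}"
  proof (rule permI)
    fix i assume "i \<in> {1..n}"
    then show "del_p \<sigma> n i \<in> {1..n}" using rng[of i] l by (auto simp: del_p_def l_def[symmetric])
  next
    show "inj_on (del_p \<sigma> n) {1..n}"
    proof (rule inj_onI)
      fix i j assume i: "i \<in> {1..n}" and j: "j \<in> {1..n}" and e: "del_p \<sigma> n i = del_p \<sigma> n j"
      have "\<sigma> i = \<sigma> j" using e rng[of i] rng[of j] i j by (auto simp: del_p_def l_def[symmetric] split: if_splits)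
      then show "i = j" by (rule perm_inj[OF p])
    qed
  next
    fix i assume "i \<notin> {1..n}" then show "del_p \<sigma> n i = i" by (auto simp: del_p_def)
  qed
  have "snoc_p (del_p \<sigma> n) n l = \<sigma>"
  proof
    fix i
    show "snoc_p (del_p \<sigma> n) n l i = \<sigma> i"
    proof (cases "i = Suc n")
      case True then show ?thesis by (simp add: l_def)
    next
      case False
      show ?thesis
      proof (cases "1 \<le> i \<and> i \<le> n")
        case True then show ?thesis using rng[of i] by (auto simp: snoc_in del_p_def sh_def l_def[symmetric])
      next
        case False then show ?thesis using \<open>i \<noteq> Suc n\<close> perm_out[OF p, of i] by (auto simp: snoc_p_def)
      qed
    qed
  qed
  then show ?thesis using dp by (simp add: l_def)
qed

definition B :: "(nat \<Rightarrow> nat) \<Rightarrow> nat \<Rightarrow> nat \<Rightarrow> bool" where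
  "B \<tau> n l \<longleftrightarrow> \<not> (\<exists>i1 i2 i3. 1 \<le> i1 \<and> i1 < i2 \<and> i2 < i3 \<and> i3 \<le> n \<and> \<tau> i1 < l \<and> \<tau> i2 < l \<and> \<tau> i3 < l \<and>
     ((\<tau> i1 < \<tau> i3 \<and> \<tau> i3 < \<tau> i2) \<or> (\<tau> i2 < \<tau> i1 \<and> \<tau> i1 < \<tau> i3)))"

definition X :: "(nat \<Rightarrow> nat) \<Rightarrow> nat \<Rightarrow> nat \<Rightarrow> nat \<Rightarrow> bool" where
  "X \<tau> n l k \<longleftrightarrow> (\<exists>i1 i2. 1 \<le> i1 \<and> i1 < i2 \<and> i2 \<le> n \<and> \<tau> i1 < l \<and> l \<le> \<tau> i2 \<and> Suc (\<tau> i2) < k)"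

definition Y :: "(nat \<Rightarrow> nat) \<Rightarrow> nat \<Rightarrow> nat \<Rightarrow> bool" where
  "Y \<tau> n l \<longleftrightarrow> (\<exists>i1 i2. 1 \<le> i1 \<and> i1 < i2 \<and> i2 \<le> n \<and> \<tau> i2 < \<tau> i1 \<and> \<tau> i1 < l)"

lemma B_mono: "B \<tau> n l \<Longrightarrow> k \<le> l \<Longrightarrow> B \<tau> n k"
  unfolding B_def by (meson order_less_le_trans)

lemma B_triv:
  assumes p: "\<tau> permutes {1..m}" and k: "k \<le> 3"
  shows "B \<tau> m k"
  unfolding B_def
proof
  assume "\<exists>i1 i2 i3. 1 \<le> i1 \<and> i1 < i2 \<and> i2 < i3 \<and> i3 \<le> m \<and> \<tau> i1 < k \<and> \<tau> i2 < k \<and> \<tau> i3 < k \<and>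
     ((\<tau> i1 < \<tau> i3 \<and> \<tau> i3 < \<tau> i2) \<or> (\<tau> i2 < \<tau> i1 \<and> \<tau> i1 < \<tau> i3))"
  then obtain i1 i2 i3 where i: "1 \<le> i1" "i1 < i2" "i2 < i3" "i3 \<le> m" "\<tau> i1 < k" "\<tau> i2 < k" "\<tau> i3 < k"
     "(\<tau> i1 < \<tau> i3 \<and> \<tau> i3 < \<tau> i2) \<or> (\<tau> i2 < \<tau> i1 \<and> \<tau> i1 < \<tau> i3)" by blast
  have "1 \<le> \<tau> i1" "1 \<le> \<tau> i2" using perm_range[OF p, of i1] perm_range[OF p, of i2] i by auto
  then show False using i k by linarith
qed

lemma sh_lt_k: "sh l v < k \<longleftrightarrow> v < (if k \<le> l then k else k - 1)"
  by (auto simp: sh_def)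

lemma snoc_P4:
  assumes p: "\<tau> permutes {1..n}"
  shows "P4 (snoc_p \<tau> n l) (Suc n) \<longleftrightarrow> P4 \<tau> n \<or> \<not> B \<tau> n l"
proof
  assume "P4 (snoc_p \<tau> n l) (Suc n)"
  then obtain i1 i2 i3 i4 where i: "1 \<le> i1" "i1 < i2" "i2 < i3" "i3 < i4" "i4 \<le> Suc n" and
    pat: "(snoc_p \<tau> n l i1 < snoc_p \<tau> n l i3 \<and> snoc_p \<tau> n l i3 < snoc_p \<tau> n l i2 \<and> snoc_p \<tau> n l i2 < snoc_p \<tau> n l i4) \<or>
          (snoc_p \<tau> n l i2 < snoc_p \<tau> n l i1 \<and> snoc_p \<tau> n l i1 < snoc_p \<tau> n l i3 \<and> snoc_p \<tau> n l i3 < snoc_p \<tau> n l i4)"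
    unfolding P4_def by blast
  have s1: "snoc_p \<tau> n l i1 = sh l (\<tau> i1)" "snoc_p \<tau> n l i2 = sh l (\<tau> i2)" "snoc_p \<tau> n l i3 = sh l (\<tau> i3)"
    using i by (auto intro!: snoc_in)
  show "P4 \<tau> n \<or> \<not> B \<tau> n l"
  proof (cases "i4 \<le> n")
    case True
    then have s4: "snoc_p \<tau> n l i4 = sh l (\<tau> i4)" using i by (auto intro!: snoc_in)
    have "P4 \<tau> n" unfolding P4_def
      apply (rule exI[of _ i1], rule exI[of _ i2], rule exI[of _ i3], rule exI[of _ i4]) using i pat s1 s4 True by auto
    then show ?thesis by simp
  next
    case False
    then have "i4 = Suc n" using i by simp
    then have l4: "snoc_p \<tau> n l i4 = l" by simp
    have lt: "sh l (\<tau> i1) < l" "sh l (\<tau> i2) < l" "sh l (\<tau> i3) < l" using pat s1 l4 by auto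
    then have "\<tau> i1 < l" "\<tau> i2 < l" "\<tau> i3 < l" by auto
    then have e: "sh l (\<tau> i1) = \<tau> i1" "sh l (\<tau> i2) = \<tau> i2" "sh l (\<tau> i3) = \<tau> i3" by (auto simp: sh_def)
    have "\<not> B \<tau> n l" unfolding B_def not_not
      apply (rule exI[of _ i1], rule exI[of _ i2], rule exI[of _ i3]) using e i pat s1 l4 \<open>i4 = Suc n\<close> \<open>\<tau> i1 < l\<close> \<open>\<tau> i2 < l\<close> \<open>\<tau> i3 < l\<close> by auto
    then show ?thesis by simp
  qed
next
  assume "P4 \<tau> n \<or> \<not> B \<tau> n l"
  then show "P4 (snoc_p \<tau> n l) (Suc n)"
  proof
    assume "P4 \<tau> n"
    then obtain i1 i2 i3 i4 where i: "1 \<le> i1" "i1 < i2" "i2 < i3" "i3 < i4" "i4 \<le> n" and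
      pat: "(\<tau> i1 < \<tau> i3 \<and> \<tau> i3 < \<tau> i2 \<and> \<tau> i2 < \<tau> i4) \<or> (\<tau> i2 < \<tau> i1 \<and> \<tau> i1 < \<tau> i3 \<and> \<tau> i3 < \<tau> i4)"
      unfolding P4_def by blast
    have s1: "snoc_p \<tau> n l i1 = sh l (\<tau> i1)" "snoc_p \<tau> n l i2 = sh l (\<tau> i2)" "snoc_p \<tau> n l i3 = sh l (\<tau> i3)"
       "snoc_p \<tau> n l i4 = sh l (\<tau> i4)"
      using i by (auto intro!: snoc_in)
    show ?thesis unfolding P4_def
      apply (rule exI[of _ i1], rule exI[of _ i2], rule exI[of _ i3], rule exI[of _ i4]) using i pat s1 by auto
  next
    assume "\<not> B \<tau> n l"
    then obtain i1 i2 i3 where i: "1 \<le> i1" "i1 < i2" "i2 < i3" "i3 \<le> n" "\<tau> i1 < l" "\<tau> i2 < l" "\<tau> i3 < l" and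
      pat: "(\<tau> i1 < \<tau> i3 \<and> \<tau> i3 < \<tau> i2) \<or> (\<tau> i2 < \<tau> i1 \<and> \<tau> i1 < \<tau> i3)"
      unfolding B_def by blast
    have s1: "snoc_p \<tau> n l i1 = \<tau> i1" "snoc_p \<tau> n l i2 = \<tau> i2" "snoc_p \<tau> n l i3 = \<tau> i3"
      using i by (auto simp: snoc_in sh_def)
    show ?thesis unfolding P4_def
      apply (rule exI[of _ i1], rule exI[of _ i2], rule exI[of _ i3], rule exI[of _ "Suc n"]) using i pat s1 by auto
  qed
qed

lemma snoc_B:
  assumes p: "\<tau> permutes {1..n}"
  shows "\<not> B (snoc_p \<tau> n l) (Suc n) k \<longleftrightarrow>
     \<not> B \<tau> n (if k \<le> l then k else k - 1) \<or> (l < k \<and> (X \<tau> n l k \<or> Y \<tau> n l))"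
proof
  let ?k = "if k \<le> l then k else k - 1"
  assume "\<not> B (snoc_p \<tau> n l) (Suc n) k"
  then obtain i1 i2 i3 where i: "1 \<le> i1" "i1 < i2" "i2 < i3" "i3 \<le> Suc n"
    "snoc_p \<tau> n l i1 < k" "snoc_p \<tau> n l i2 < k" "snoc_p \<tau> n l i3 < k" and
    pat: "(snoc_p \<tau> n l i1 < snoc_p \<tau> n l i3 \<and> snoc_p \<tau> n l i3 < snoc_p \<tau> n l i2) \<or>
          (snoc_p \<tau> n l i2 < snoc_p \<tau> n l i1 \<and> snoc_p \<tau> n l i1 < snoc_p \<tau> n l i3)"
    unfolding B_def by blast
  have s1: "snoc_p \<tau> n l i1 = sh l (\<tau> i1)" "snoc_p \<tau> n l i2 = sh l (\<tau> i2)"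
    using i by (auto intro!: snoc_in)
  show "\<not> B \<tau> n ?k \<or> (l < k \<and> (X \<tau> n l k \<or> Y \<tau> n l))"
  proof (cases "i3 \<le> n")
    case True
    then have s3: "snoc_p \<tau> n l i3 = sh l (\<tau> i3)" using i by (auto intro!: snoc_in)
    have kk: "\<tau> i1 < ?k" "\<tau> i2 < ?k" "\<tau> i3 < ?k" using i s1 s3 by (simp_all only: sh_lt_k[symmetric])
    have "\<not> B \<tau> n ?k" unfolding B_def not_not
      apply (rule exI[of _ i1], rule exI[of _ i2], rule exI[of _ i3]) using kk i pat s1 s3 True by auto
    then show ?thesis by simp
  next
    case False
    then have "i3 = Suc n" using i by simp
    then have l3: "snoc_p \<tau> n l i3 = l" by simp
    have lk: "l < k" using i l3 by simp
    show ?thesis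
    proof (cases "snoc_p \<tau> n l i1 < snoc_p \<tau> n l i3 \<and> snoc_p \<tau> n l i3 < snoc_p \<tau> n l i2")
      case True
      then have "\<tau> i1 < l" "l \<le> \<tau> i2" "Suc (\<tau> i2) < k" using s1 l3 i by (auto simp: sh_def split: if_splits)
      moreover have "i2 \<le> n" using i \<open>i3 = Suc n\<close> by simp
      ultimately have "X \<tau> n l k" unfolding X_def using i by blast
      then show ?thesis using lk by simp
    next
      case False
      then have "snoc_p \<tau> n l i2 < snoc_p \<tau> n l i1 \<and> snoc_p \<tau> n l i1 < l" using pat l3 by auto
      then have "\<tau> i2 < \<tau> i1" "\<tau> i1 < l" using s1 by (auto simp: sh_def split: if_splits)
      moreover have "i2 \<le> n" using i \<open>i3 = Suc n\<close> by simp
      ultimately have "Y \<tau> n l" unfolding Y_def using i by blast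
      then show ?thesis using lk by simp
    qed
  qed
next
  let ?k = "if k \<le> l then k else k - 1"
  assume "\<not> B \<tau> n ?k \<or> (l < k \<and> (X \<tau> n l k \<or> Y \<tau> n l))"
  then show "\<not> B (snoc_p \<tau> n l) (Suc n) k"
  proof
    assume "\<not> B \<tau> n ?k"
    then obtain i1 i2 i3 where i: "1 \<le> i1" "i1 < i2" "i2 < i3" "i3 \<le> n" "\<tau> i1 < ?k" "\<tau> i2 < ?k" "\<tau> i3 < ?k" and
      pat: "(\<tau> i1 < \<tau> i3 \<and> \<tau> i3 < \<tau> i2) \<or> (\<tau> i2 < \<tau> i1 \<and> \<tau> i1 < \<tau> i3)"
      unfolding B_def by blast
    have s1: "snoc_p \<tau> n l i1 = sh l (\<tau> i1)" "snoc_p \<tau> n l i2 = sh l (\<tau> i2)" "snoc_p \<tau> n l i3 = sh l (\<tau> i3)"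
      using i by (auto intro!: snoc_in)
    have kk: "sh l (\<tau> i1) < k" "sh l (\<tau> i2) < k" "sh l (\<tau> i3) < k" using i by (simp_all only: sh_lt_k)
    show ?thesis unfolding B_def not_not
      apply (rule exI[of _ i1], rule exI[of _ i2], rule exI[of _ i3]) using kk i pat s1 by auto
  next
    assume a: "l < k \<and> (X \<tau> n l k \<or> Y \<tau> n l)"
    then have lk: "l < k" by simp
    from a have "X \<tau> n l k \<or> Y \<tau> n l" by simp
    then show ?thesis
    proof
      assume "X \<tau> n l k"
      then obtain i1 i2 where i: "1 \<le> i1" "i1 < i2" "i2 \<le> n" "\<tau> i1 < l" "l \<le> \<tau> i2" "Suc (\<tau> i2) < k"
        unfolding X_def by blast
      have s1: "snoc_p \<tau> n l i1 = \<tau> i1" "snoc_p \<tau> n l i2 = Suc (\<tau> i2)"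
        using i by (auto simp: snoc_in sh_def)
      show ?thesis unfolding B_def not_not
      apply (rule exI[of _ i1], rule exI[of _ i2], rule exI[of _ "Suc n"]) using i s1 lk by auto
    next
      assume "Y \<tau> n l"
      then obtain i1 i2 where i: "1 \<le> i1" "i1 < i2" "i2 \<le> n" "\<tau> i2 < \<tau> i1" "\<tau> i1 < l"
        unfolding Y_def by blast
      have s1: "snoc_p \<tau> n l i1 = \<tau> i1" "snoc_p \<tau> n l i2 = \<tau> i2"
        using i by (auto simp: snoc_in sh_def)
      show ?thesis unfolding B_def not_not
      apply (rule exI[of _ i1], rule exI[of _ i2], rule exI[of _ "Suc n"]) using i s1 lk by auto
    qed
  qed
qed

lemma Y_mono: "Y \<tau> n a \<Longrightarrow> a \<le> b \<Longrightarrow> Y \<tau> n b"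
  unfolding Y_def by (meson order_less_le_trans)

lemma two_count:
  assumes p: "\<tau> permutes {1..n}" and k: "4 \<le> k" "k \<le> n + 2" and Bk: "B \<tau> n (k - 1)"
  shows "card {l \<in> {1..k-1}. \<not> X \<tau> n l k \<and> \<not> Y \<tau> n l} = 2"
proof -
  define q where "q = k - 2"
  have q: "2 \<le> q" "q \<le> n" "k - 1 = Suc q" "k = Suc (Suc q)" using k by (auto simp: q_def)
  have rng: "1 \<le> \<tau> i \<and> \<tau> i \<le> n" if "1 \<le> i" "i \<le> n" for i using perm_range[OF p] that by blast
  have inj: "\<tau> i = \<tau> j \<Longrightarrow> i = j" for i j using perm_inj[OF p] by blast
  have pos: "\<exists>i. 1 \<le> i \<and> i \<le> n \<and> \<tau> i = v" if "1 \<le> v" "v \<le> n" for v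
    using perm_surj[OF p, of v] that by auto
  have noB: "\<not> (1 \<le> i1 \<and> i1 < i2 \<and> i2 < i3 \<and> i3 \<le> n \<and> \<tau> i1 \<le> q \<and> \<tau> i2 \<le> q \<and> \<tau> i3 \<le> q \<and>
     ((\<tau> i1 < \<tau> i3 \<and> \<tau> i3 < \<tau> i2) \<or> (\<tau> i2 < \<tau> i1 \<and> \<tau> i1 < \<tau> i3)))" for i1 i2 i3
    using Bk q unfolding B_def by (metis less_Suc_eq_le)
  define Js where "Js = {j \<in> {1..q}. \<not> Y \<tau> n (Suc j)}"
  define J where "J = Max Js"
  have "1 \<in> Js"
  proof -
    have "\<not> Y \<tau> n 2"
    proof
      assume "Y \<tau> n 2"
      then obtain i1 i2 where "1 \<le> i1" "i1 < i2" "i2 \<le> n" "\<tau> i2 < \<tau> i1" "\<tau> i1 < 2" unfolding Y_def by blast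
      then show False using rng[of i2] by linarith
    qed
    then show ?thesis using q by (simp add: Js_def numeral_2_eq_2)
  qed
  have fin: "finite Js" by (simp add: Js_def)
  have J: "J \<in> Js" using fin \<open>1 \<in> Js\<close> by (auto simp: J_def intro: Max_in)
  have Jmax: "j \<in> Js \<Longrightarrow> j \<le> J" for j using fin by (simp add: J_def)
  have J1: "1 \<le> J" "J \<le> q" "\<not> Y \<tau> n (Suc J)" using J by (auto simp: Js_def)
  have YJ2: "Y \<tau> n (Suc (Suc J))" if "Suc J \<le> q"
  proof (rule ccontr)
    assume "\<not> Y \<tau> n (Suc (Suc J))"
    then have "Suc J \<in> Js" using that by (simp add: Js_def)
    then show False using Jmax by fastforce
  qed
  have set_eq: "{l \<in> {1..k-1}. \<not> X \<tau> n l k \<and> \<not> Y \<tau> n l} = {1, Suc J}"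
  proof (rule set_eqI, rule iffI)
    fix l assume "l \<in> {l \<in> {1..k-1}. \<not> X \<tau> n l k \<and> \<not> Y \<tau> n l}"
    then have l: "1 \<le> l" "l \<le> Suc q" "\<not> X \<tau> n l k" "\<not> Y \<tau> n l" using q by auto
    show "l \<in> {1, Suc J}"
    proof (rule ccontr)
      assume ne: "l \<notin> {1, Suc J}"
      show False
      proof (cases "l \<le> J")
        case True
        then have l2: "2 \<le> l" using ne l by auto
        have "\<exists>i. 1 \<le> i \<and> i \<le> n \<and> \<tau> i = l - 1" using l2 True J1 q by (intro pos) auto
        then obtain a where a: "1 \<le> a" "a \<le> n" "\<tau> a = l - 1" by blast
        have "\<exists>i. 1 \<le> i \<and> i \<le> n \<and> \<tau> i = l" using l2 True J1 q by (intro pos) auto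
        then obtain b where b: "1 \<le> b" "b \<le> n" "\<tau> b = l" by blast
        have "a \<noteq> b" using a b l2 by auto
        moreover have "\<not> b < a"
        proof
          assume "b < a"
          then have "Y \<tau> n (Suc J)" unfolding Y_def using a b l2 True
            by (intro exI[of _ b] exI[of _ a]) auto
          then show False using J1 by simp
        qed
        ultimately have "a < b" by simp
        then have "X \<tau> n l k" unfolding X_def using a b l2 True J1 q
          by (intro exI[of _ a] exI[of _ b]) auto
        then show False using l by simp
      next
        case False
        then have "Suc (Suc J) \<le> l" using ne by auto
        then have "Suc J \<le> q" using l by simp
        then have "Y \<tau> n l" using YJ2 Y_mono \<open>Suc (Suc J) \<le> l\<close> by blast
        then show False using l by simp
      qed
    qed
  next
    fix l assume "l \<in> {1, Suc J}"
    then consider "l = 1" | "l = Suc J" by blast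
    then show "l \<in> {l \<in> {1..k-1}. \<not> X \<tau> n l k \<and> \<not> Y \<tau> n l}"
    proof cases
      case 1
      have "\<not> X \<tau> n 1 k" unfolding X_def using rng by fastforce
      moreover have "\<not> Y \<tau> n 1" unfolding Y_def using rng by fastforce
      ultimately show ?thesis using 1 q by auto
    next
      case 2
      have "\<not> X \<tau> n (Suc J) k"
      proof
        assume "X \<tau> n (Suc J) k"
        then obtain a b where ab: "1 \<le> a" "a < b" "b \<le> n" "\<tau> a < Suc J" "Suc J \<le> \<tau> b" "Suc (\<tau> b) < k"
          unfolding X_def by blast
        have "Suc J \<le> q" using ab q by simp
        then have "Y \<tau> n (Suc (Suc J))" by (rule YJ2)
        then obtain c d where cd: "1 \<le> c" "c < d" "d \<le> n" "\<tau> d < \<tau> c" "\<tau> c < Suc (Suc J)"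
          unfolding Y_def by blast
        have "\<not> \<tau> c < Suc J"
        proof
          assume "\<tau> c < Suc J"
          then have "Y \<tau> n (Suc J)" unfolding Y_def using cd by blast
          then show False using J1 by simp
        qed
        then have tc: "\<tau> c = Suc J" using cd by simp
        have tb: "\<tau> b \<le> q" using ab q by simp
        show False
        proof (cases "c < a")
          case True
          have "\<tau> b \<noteq> Suc J"
          proof
            assume "\<tau> b = Suc J"
            then have "b = c" using tc inj by simp
            then show False using True ab by simp
          qed
          then have "\<tau> c < \<tau> b" using ab tc by simp
          then show False using noB[of c a b] True ab cd tc tb J1 by auto
        next
          case False
          then have "a < c" using ab tc by (cases "a = c") auto
          show False
          proof (cases "\<tau> a < \<tau> d")
            case True
            then show False using noB[of a c d] \<open>a < c\<close> ab cd tc J1 \<open>Suc J \<le> q\<close> by auto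
          next
            case False
            then have "\<tau> d < \<tau> a \<or> \<tau> d = \<tau> a" by auto
            then show False
            proof
              assume "\<tau> d < \<tau> a"
              then have "Y \<tau> n (Suc J)" unfolding Y_def using ab cd \<open>a < c\<close>
                by (intro exI[of _ a] exI[of _ d]) auto
              then show False using J1 by simp
            next
              assume "\<tau> d = \<tau> a"
              then have "d = a" using inj by simp
              then show False using \<open>a < c\<close> cd by simp
            qed
          qed
        qed
      qed
      then show ?thesis using 2 J1 q by auto
    qed
  qed
  show ?thesis unfolding set_eq using J1 by simp
qed

lemma per_tau_low:
  assumes p: "\<tau> permutes {1..n}" and k: "k \<le> 3"
  shows "{l \<in> {1..Suc n}. B \<tau> n l \<and> B (snoc_p \<tau> n l) (Suc n) k} = {l \<in> {1..Suc n}. B \<tau> n l}"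
  using B_triv[OF snoc_perm[OF p] k] by auto

lemma per_tau_high:
  assumes p: "\<tau> permutes {1..n}" and k: "4 \<le> k" "k \<le> n + 2"
  shows "card {l \<in> {1..Suc n}. B \<tau> n l \<and> B (snoc_p \<tau> n l) (Suc n) k}
    = card {j \<in> {k..Suc n}. B \<tau> n j} + (if B \<tau> n (k - 1) then 2 else 0)"
proof -
  define A1 where "A1 = {j \<in> {k..Suc n}. B \<tau> n j}"
  define A2 where "A2 = {l \<in> {1..k-1}. B \<tau> n (k - 1) \<and> \<not> X \<tau> n l k \<and> \<not> Y \<tau> n l}"
  have eq: "{l \<in> {1..Suc n}. B \<tau> n l \<and> B (snoc_p \<tau> n l) (Suc n) k} = A1 \<union> A2"
  proof (rule set_eqI)
    fix l
    have sb: "B (snoc_p \<tau> n l) (Suc n) k \<longleftrightarrow>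
       B \<tau> n (if k \<le> l then k else k - 1) \<and> \<not> (l < k \<and> (X \<tau> n l k \<or> Y \<tau> n l))"
      using snoc_B[OF p, of l k] by blast
    show "l \<in> {l \<in> {1..Suc n}. B \<tau> n l \<and> B (snoc_p \<tau> n l) (Suc n) k} \<longleftrightarrow> l \<in> A1 \<union> A2"
    proof (cases "k \<le> l")
      case True
      then show ?thesis using sb k B_mono[of \<tau> n l k] by (auto simp: A1_def A2_def)
    next
      case False
      then show ?thesis using sb k B_mono[of \<tau> n "k - 1" l] by (auto simp: A1_def A2_def)
    qed
  qed
  have disj: "A1 \<inter> A2 = {}" by (auto simp: A1_def A2_def)
  have "card A2 = (if B \<tau> n (k - 1) then 2 else 0)"
  proof (cases "B \<tau> n (k - 1)")
    case True
    then have "A2 = {l \<in> {1..k-1}. \<not> X \<tau> n l k \<and> \<not> Y \<tau> n l}" by (auto simp: A2_def)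
    then show ?thesis using two_count[OF p k True] True by simp
  next
    case False then show ?thesis by (simp add: A2_def)
  qed
  then show ?thesis unfolding eq using disj by (simp add: card_Un_disjoint A1_def A2_def)
qed

lemma fin_av: "finite (av_perms n)"
proof -
  have "av_perms n \<subseteq> {\<sigma>. \<sigma> permutes {1..n}}" by (auto simp: av_perms_def)
  then show ?thesis using finite_permutations[of "{1..n}"] finite_subset by auto
qed

lemma decomp:
  "card {\<sigma> \<in> av_perms (Suc n). Q \<sigma>} =
     (\<Sum>\<tau>\<in>av_perms n. card {l \<in> {1..Suc n}. B \<tau> n l \<and> Q (snoc_p \<tau> n l)})"
proof -
  define F where "F = (\<lambda>(\<tau>, l). snoc_p \<tau> n l)"
  define Sig where "Sig = (SIGMA \<tau>:av_perms n. {l \<in> {1..Suc n}. B \<tau> n l \<and> Q (snoc_p \<tau> n l)})"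
  have img: "{\<sigma> \<in> av_perms (Suc n). Q \<sigma>} = F ` Sig"
  proof (rule set_eqI, rule iffI)
    fix \<sigma> assume "\<sigma> \<in> {\<sigma> \<in> av_perms (Suc n). Q \<sigma>}"
    then have s: "\<sigma> permutes {1..Suc n}" "\<not> P4 \<sigma> (Suc n)" "Q \<sigma>" by (auto simp: av_iff)
    define \<tau> where "\<tau> = del_p \<sigma> n"
    define l where "l = \<sigma> (Suc n)"
    have t: "\<tau> permutes {1..n}" "snoc_p \<tau> n l = \<sigma>" using del_perm_snoc[OF s(1)] by (auto simp: \<tau>_def l_def)
    have l: "1 \<le> l" "l \<le> Suc n" using perm_range[OF s(1), of "Suc n"] by (auto simp: l_def)
    have "\<not> P4 \<tau> n" "B \<tau> n l" using snoc_P4[OF t(1), of l] t(2) s(2) by auto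
    then have "(\<tau>, l) \<in> Sig" using t l s(3) by (auto simp: Sig_def av_iff)
    then show "\<sigma> \<in> F ` Sig" using t(2) by (force simp: F_def)
  next
    fix \<sigma> assume "\<sigma> \<in> F ` Sig"
    then obtain \<tau> l where tl: "(\<tau>, l) \<in> Sig" "\<sigma> = snoc_p \<tau> n l" by (auto simp: F_def)
    then have t: "\<tau> permutes {1..n}" "\<not> P4 \<tau> n" "1 \<le> l" "l \<le> Suc n" "B \<tau> n l" "Q \<sigma>"
      by (auto simp: Sig_def av_iff)
    have "\<sigma> permutes {1..Suc n}" using snoc_perm[OF t(1) t(3) t(4)] tl(2) by simp
    moreover have "\<not> P4 \<sigma> (Suc n)" using snoc_P4[OF t(1), of l] t tl(2) by simp
    ultimately show "\<sigma> \<in> {\<sigma> \<in> av_perms (Suc n). Q \<sigma>}" using t by (simp add: av_iff)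
  qed
  have inj: "inj_on F Sig"
  proof (rule inj_onI)
    fix x y assume x: "x \<in> Sig" and y: "y \<in> Sig" and e: "F x = F y"
    obtain \<tau> l where xe: "x = (\<tau>, l)" by (cases x)
    obtain \<tau>' l' where ye: "y = (\<tau>', l')" by (cases y)
    have p: "\<tau> permutes {1..n}" "\<tau>' permutes {1..n}" using x y xe ye by (auto simp: Sig_def av_iff)
    have e': "snoc_p \<tau> n l = snoc_p \<tau>' n l'" using e xe ye by (simp add: F_def)
    then have "l = l'" using snoc_last[of \<tau> n l] snoc_last[of \<tau>' n l'] by metis
    moreover have "\<tau> = \<tau>'" using del_snoc[OF p(1), of l] del_snoc[OF p(2), of l'] e' by metis
    ultimately show "x = y" using xe ye by simp
  qed
  have "card {\<sigma> \<in> av_perms (Suc n). Q \<sigma>} = card Sig" unfolding img using inj by (rule card_image)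
  also have "\<dots> = (\<Sum>\<tau>\<in>av_perms n. card {l \<in> {1..Suc n}. B \<tau> n l \<and> Q (snoc_p \<tau> n l)})"
    unfolding Sig_def by (rule card_SigmaI) (auto simp: fin_av)
  finally show ?thesis .
qed

lemma card_filter_sum: "finite A \<Longrightarrow> card {x \<in> A. P x} = (\<Sum>x\<in>A. if P x then 1 else 0)"
  by (simp add: sum.If_cases Int_def)

lemma swap_card:
  assumes "finite A" "finite J"
  shows "(\<Sum>\<tau>\<in>A. card {j \<in> J. P \<tau> j}) = (\<Sum>j\<in>J. card {\<tau> \<in> A. P \<tau> j})"
  using assms by (simp add: card_filter_sum sum.swap[of _ A J])

lemma s_eq: "l \<in> {1..Suc n} \<Longrightarrow> s (Suc n) l = card {\<tau> \<in> av_perms n. B \<tau> n l}"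
proof -
  assume l: "l \<in> {1..Suc n}"
  have "s (Suc n) l = (\<Sum>\<tau>\<in>av_perms n. card {l' \<in> {1..Suc n}. B \<tau> n l' \<and> snoc_p \<tau> n l' (Suc n) = l})"
    unfolding s_def by (rule decomp)
  also have "\<dots> = (\<Sum>\<tau>\<in>av_perms n. if B \<tau> n l then 1 else 0)"
  proof (rule sum.cong)
    fix \<tau>
    have "{l' \<in> {1..Suc n}. B \<tau> n l' \<and> snoc_p \<tau> n l' (Suc n) = l} = (if B \<tau> n l then {l} else {})"
      using l by auto
    then show "card {l' \<in> {1..Suc n}. B \<tau> n l' \<and> snoc_p \<tau> n l' (Suc n) = l} = (if B \<tau> n l then 1 else 0)"
      by simp
  qed simp
  also have "\<dots> = card {\<tau> \<in> av_perms n. B \<tau> n l}" by (simp add: card_filter_sum fin_av)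
  finally show ?thesis .
qed

lemma R1:
  assumes k: "1 \<le> k" "k \<le> 3" "k \<le> Suc (Suc n)"
  shows "s (Suc (Suc n)) k = (\<Sum>j=1..Suc n. s (Suc n) j)"
proof -
  have "s (Suc (Suc n)) k = card {\<sigma> \<in> av_perms (Suc n). B \<sigma> (Suc n) k}" using k by (intro s_eq) auto
  also have "\<dots> = (\<Sum>\<tau>\<in>av_perms n. card {l \<in> {1..Suc n}. B \<tau> n l \<and> B (snoc_p \<tau> n l) (Suc n) k})"
    by (rule decomp)
  also have "\<dots> = (\<Sum>\<tau>\<in>av_perms n. card {l \<in> {1..Suc n}. B \<tau> n l})"
    by (rule sum.cong[OF refl], rule arg_cong[where f=card], rule per_tau_low) (auto simp: av_iff k)
  also have "\<dots> = (\<Sum>j\<in>{1..Suc n}. card {\<tau> \<in> av_perms n. B \<tau> n j})" by (rule swap_card) (auto simp: fin_av)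
  also have "\<dots> = (\<Sum>j=1..Suc n. s (Suc n) j)" by (rule sum.cong) (auto simp: s_eq)
  finally show ?thesis .
qed

lemma R2:
  assumes k: "4 \<le> k" "k \<le> n + 2"
  shows "s (Suc (Suc n)) k = (\<Sum>j=k..Suc n. s (Suc n) j) + 2 * s (Suc n) (k - 1)"
proof -
  have "s (Suc (Suc n)) k = card {\<sigma> \<in> av_perms (Suc n). B \<sigma> (Suc n) k}" using k by (intro s_eq) auto
  also have "\<dots> = (\<Sum>\<tau>\<in>av_perms n. card {l \<in> {1..Suc n}. B \<tau> n l \<and> B (snoc_p \<tau> n l) (Suc n) k})"
    by (rule decomp)
  also have "\<dots> = (\<Sum>\<tau>\<in>av_perms n. card {j \<in> {k..Suc n}. B \<tau> n j} + (if B \<tau> n (k - 1) then 2 else 0))"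
    using k by (intro sum.cong[OF refl] per_tau_high) (auto simp: av_iff)
  also have "\<dots> = (\<Sum>\<tau>\<in>av_perms n. card {j \<in> {k..Suc n}. B \<tau> n j}) + (\<Sum>\<tau>\<in>av_perms n. if B \<tau> n (k - 1) then 2 else 0)"
    by (rule sum.distrib)
  also have "(\<Sum>\<tau>\<in>av_perms n. if B \<tau> n (k - 1) then 2 else 0) = (\<Sum>\<tau>\<in>av_perms n. 2 * (if B \<tau> n (k - 1) then 1 else (0::nat)))"
    by (rule sum.cong) auto
  also have "\<dots> = 2 * card {\<tau> \<in> av_perms n. B \<tau> n (k - 1)}"
    by (simp only: sum_distrib_left[symmetric] card_filter_sum[OF fin_av])
  also have "(\<Sum>\<tau>\<in>av_perms n. card {j \<in> {k..Suc n}. B \<tau> n j}) = (\<Sum>j\<in>{k..Suc n}. card {\<tau> \<in> av_perms n. B \<tau> n j})"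
    by (rule swap_card) (auto simp: fin_av)
  also have "\<dots> = (\<Sum>j=k..Suc n. s (Suc n) j)" by (rule sum.cong) (use k in \<open>auto simp: s_eq\<close>)
  also have "card {\<tau> \<in> av_perms n. B \<tau> n (k - 1)} = s (Suc n) (k - 1)" using k by (intro s_eq[symmetric]) auto
  finally show ?thesis .
qed

lemma av0: "av_perms 0 = {id}"
proof -
  have "\<not> P4 id 0" by (auto simp: P4_def)
  then show ?thesis by (auto simp: av_iff)
qed

lemma s11: "s 1 1 = 1"
proof -
  have "B id 0 1" by (auto simp: B_def)
  then have "{\<tau> \<in> av_perms 0. B \<tau> 0 1} = {id}" using av0 by auto
  then show ?thesis using s_eq[of 1 0] by simp
qed

lemma card_av: "n \<ge> 1 \<Longrightarrow> card (av_perms n) = (\<Sum>l=1..n. s n l)"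
proof -
  assume n: "n \<ge> 1"
  have "av_perms n = (\<Union>l\<in>{1..n}. {\<sigma> \<in> av_perms n. \<sigma> n = l})"
    using perm_range[of _ n n] n by (auto simp: av_iff)
  then have "card (av_perms n) = card (\<Union>l\<in>{1..n}. {\<sigma> \<in> av_perms n. \<sigma> n = l})" by simp
  also have "\<dots> = (\<Sum>l=1..n. card {\<sigma> \<in> av_perms n. \<sigma> n = l})"
    by (rule card_UN_disjoint) (auto simp: fin_av)
  finally show ?thesis by (simp add: s_def)
qed



definition Sf :: "real fps" where "Sf = (1 - fps_X - sqrt_fps) / 2"
definition Vf :: "real fps" where "Vf = fps_X + Sf"

lemma sqrt_sq: "sqrt_fps ^ 2 = 1 - 6 * fps_X + fps_X ^ 2"
proof -
  have a0: "(1 - 6 * fps_X + fps_X ^ 2 :: real fps) $ 0 = 1" by simp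
  have "(root (Suc 1) ((1 - 6 * fps_X + fps_X ^ 2 :: real fps) $ 0)) ^ Suc 1 = (1 - 6 * fps_X + fps_X ^ 2 :: real fps) $ 0"
    by (simp only: a0) simp
  from power_radical[of "1 - 6 * fps_X + fps_X ^ 2 :: real fps" "\<lambda>k c. root k c" 1, OF _ ] this a0
  show ?thesis unfolding sqrt_fps_def by (simp add: numeral_2_eq_2)
qed

lemma sqrt0: "sqrt_fps $ 0 = 1"
  unfolding sqrt_fps_def by simp

lemma sqrt_eq: "sqrt_fps = 1 - fps_X - 2 * Sf"
proof -
  have "(2::real fps) * ((1 - fps_X - sqrt_fps) / 2) = 1 - fps_X - sqrt_fps"
  proof -
    have i: "(2::real fps) * inverse 2 = 1" by (rule inverse_mult_eq_1') simp
    show ?thesis by (simp add: fps_divide_unit mult.commute mult.left_commute i)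
  qed
  then show ?thesis unfolding Sf_def by (simp add: algebra_simps)
qed

lemma S_rel: "Sf ^ 2 = (1 - fps_X) * Sf - fps_X"
proof -
  have "(1 - fps_X - 2 * Sf) ^ 2 = 1 - 6 * fps_X + fps_X ^ 2"
    using sqrt_sq sqrt_eq by simp
  then have "4 * (Sf ^ 2 - ((1 - fps_X) * Sf - fps_X)) = 0"
    by (simp add: algebra_simps power2_eq_square)
  then have "Sf ^ 2 - ((1 - fps_X) * Sf - fps_X) = 0"
    unfolding mult_eq_0_iff by simp
  then show ?thesis by simp
qed

lemma S0: "Sf $ 0 = 0"
  using sqrt_eq sqrt0 by (simp add: fps_eq_iff) 

lemma S_rec: "Sf = fps_X + fps_X * Sf + Sf ^ 2"
  using S_rel by (simp add: algebra_simps)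

lemma S1: "Sf $ 1 = 1"
proof -
  have "Sf $ 1 = (fps_X + fps_X * Sf + Sf ^ 2) $ 1" using S_rec by simp
  also have "\<dots> = 1" by (simp add: fps_square_nth S0)
  finally show ?thesis .
qed

lemma S_nth_rec: "n \<ge> 2 \<Longrightarrow> Sf $ n = Sf $ (n - 1) + (Sf ^ 2) $ n"
proof -
  assume n: "n \<ge> 2"
  have "Sf $ n = (fps_X + fps_X * Sf + Sf ^ 2) $ n" using S_rec by simp
  also have "\<dots> = Sf $ (n - 1) + (Sf ^ 2) $ n" using n by simp
  finally show ?thesis .
qed

lemma V0: "Vf $ 0 = 0" by (simp add: Vf_def S0)

lemma SV: "Sf * Vf = Sf - fps_X"
  using S_rel unfolding Vf_def by (simp add: algebra_simps power2_eq_square)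

lemma S1V: "Sf * (1 - Vf) = fps_X"
  using S_rel unfolding Vf_def by (simp add: algebra_simps power2_eq_square)

lemma V1S: "Vf * (1 - Sf) = 2 * fps_X"
  using S_rel unfolding Vf_def by (simp add: algebra_simps power2_eq_square)

lemma X_shift: "(f :: 'a::comm_ring_1 fps) $ 0 = 0 \<Longrightarrow> fps_X * fps_shift 1 f = f"
  by (rule fps_ext) auto

lemma ord_lem:
  fixes f g h :: "'a::comm_ring_1 fps"
  assumes "f $ 0 = 0" "g $ 0 = 0" "m < i + j"
  shows "(f ^ i * g ^ j * h) $ m = 0"
proof -
  define f' where "f' = fps_shift 1 f"
  define g' where "g' = fps_shift 1 g"
  have f: "f = fps_X * f'" using X_shift[OF assms(1)] by (simp add: f'_def)
  have g: "g = fps_X * g'" using X_shift[OF assms(2)] by (simp add: g'_def)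
  have "f ^ i * g ^ j * h = fps_X ^ (i + j) * (f' ^ i * g' ^ j * h)"
    unfolding f g power_mult_distrib power_add by (simp add: algebra_simps)
  then show ?thesis using assms(3) by (simp add: fps_X_power_mult_nth)
qed

lemma geo: "a \<le> b \<Longrightarrow> (1 - x) * (\<Sum>i\<in>{a..<b}. x ^ i) = x ^ a - (x :: 'a::comm_ring_1) ^ b"
proof (induction b)
  case 0 then show ?case by simp
next
  case (Suc b)
  show ?case
  proof (cases "a = Suc b")
    case True then show ?thesis by simp
  next
    case False
    then have "a \<le> b" using Suc.prems by simp
    then have "(\<Sum>i\<in>{a..<Suc b}. x ^ i) = (\<Sum>i\<in>{a..<b}. x ^ i) + x ^ b" by simp
    then have "(1 - x) * (\<Sum>i\<in>{a..<Suc b}. x ^ i) = (1 - x) * (\<Sum>i\<in>{a..<b}. x ^ i) + (1 - x) * x ^ b"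
      by (simp add: distrib_left)
    also have "\<dots> = (x ^ a - x ^ b) + (1 - x) * x ^ b" using Suc.IH \<open>a \<le> b\<close> by simp
    finally show ?thesis by (simp add: algebra_simps)
  qed
qed

lemma num_mult_nth: "(numeral c * (f :: 'a::comm_ring_1 fps)) $ n = numeral c * f $ n"
  by (simp add: fps_numeral_fps_const)

definition T :: "nat \<Rightarrow> nat \<Rightarrow> real" where
  "T N l = (Sf * Vf ^ (l - 2)) $ (N - 1)"

lemma sum_shift2: fixes k n :: nat and g :: "nat \<Rightarrow> 'b::comm_monoid_add" shows "k \<ge> 2 \<Longrightarrow> (\<Sum>j=k..n+1. g j) = (\<Sum>i\<in>{k-2..<n}. g (i + 2))"
proof -
  assume "k \<ge> 2"
  then have "{k..n+1} = {k-2+2..<n+2}" by auto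
  then show ?thesis using sum.shift_bounds_nat_ivl[of g "k-2" 2 n] by simp
qed

lemma partial_sum:
  assumes "k \<ge> 2" "k \<le> n + 2"
  shows "(\<Sum>j=k..n+1. T (n+1) j) = (Sf ^ 2 * Vf ^ (k - 2)) $ (n + 1)"
proof -
  define P where "P = (\<Sum>i\<in>{k-2..<n}. Vf ^ i)"
  have "(\<Sum>j=k..n+1. T (n+1) j) = (\<Sum>i\<in>{k-2..<n}. T (n+1) (i + 2))"
    by (rule sum_shift2[OF assms(1)])
  also have "\<dots> = (\<Sum>i\<in>{k-2..<n}. (Sf * Vf ^ i) $ n)"
    by (simp add: T_def)
  also have "\<dots> = (Sf * P) $ n"
    by (simp add: P_def sum_distrib_left fps_sum_nth)
  also have "\<dots> = (fps_X * (Sf * P)) $ (n + 1)" by simp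
  also have "fps_X * (Sf * P) = Sf * (Sf * (1 - Vf)) * P" using S1V by simp
  also have "\<dots> = Sf * Sf * ((1 - Vf) * P)" by (simp add: algebra_simps)
  also have "(1 - Vf) * P = Vf ^ (k - 2) - Vf ^ n" unfolding P_def
    by (rule geo) (use assms in simp)
  also have "Sf * Sf * (Vf ^ (k - 2) - Vf ^ n) = Sf ^ 2 * Vf ^ (k - 2) - Sf ^ 2 * Vf ^ n * 1"
    by (simp add: algebra_simps power2_eq_square)
  also have "(\<dots>) $ (n + 1) = (Sf ^ 2 * Vf ^ (k - 2)) $ (n + 1)"
    using ord_lem[OF S0 V0, of "n+1" 2 n 1] by simp
  finally show ?thesis .
qed

lemma sumT: "N \<ge> 2 \<Longrightarrow> (\<Sum>l=1..N. T N l) = Sf $ N"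
proof -
  assume N: "N \<ge> 2"
  define n where "n = N - 1"
  have n: "N = n + 1" "n \<ge> 1" using N by (auto simp: n_def)
  have "(\<Sum>l=1..N. T N l) = T N 1 + (\<Sum>l=2..N. T N l)"
    using N by (simp add: sum.atLeast_Suc_atMost numeral_2_eq_2)
  also have "(\<Sum>l=2..N. T N l) = (Sf ^ 2 * Vf ^ (2 - 2)) $ N"
    using partial_sum[of 2 n] n by simp
  also have "T N 1 = Sf $ (N - 1)" by (simp add: T_def)
  finally show ?thesis using S_nth_rec[OF N] by simp
qed

lemma T_low: "N \<ge> 3 \<Longrightarrow> 1 \<le> l \<Longrightarrow> l \<le> 3 \<Longrightarrow> T N l = Sf $ (N - 1)"
proof -
  assume N: "N \<ge> 3" and l: "1 \<le> l" "l \<le> 3"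
  show ?thesis
  proof (cases "l = 3")
    case True
    then show ?thesis using N by (simp add: T_def SV)
  next
    case False
    then have "l - 2 = 0" using l by simp
    then show ?thesis by (simp add: T_def)
  qed
qed

lemma T_rec:
  assumes "4 \<le> k" "k \<le> n + 2"
  shows "T (n+2) k = (\<Sum>j=k..n+1. T (n+1) j) + 2 * T (n+1) (k - 1)"
proof -
  have e: "k - 2 = Suc (k - 3)" using assms by simp
  have "Sf * Vf ^ (k - 2) = Sf ^ 2 * Vf ^ (k - 2) + fps_X * (2 * (Sf * Vf ^ (k - 3)))"
  proof -
    have vv: "Vf = Sf * Vf + 2 * fps_X" using V1S by (simp add: algebra_simps)
    have "Sf * Vf ^ (k - 2) = (Sf * Vf ^ (k - 3)) * Vf" using e by (simp add: algebra_simps)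
    also have "\<dots> = (Sf * Vf ^ (k - 3)) * (Sf * Vf + 2 * fps_X)" using vv by (rule arg_cong)
    finally show ?thesis using e by (simp add: algebra_simps power2_eq_square)
  qed
  then have "T (n+2) k = (Sf ^ 2 * Vf ^ (k - 2)) $ (n + 1) + 2 * (Sf * Vf ^ (k - 3)) $ n"
    by (simp add: T_def num_mult_nth)
  moreover have "k - 1 - 2 = k - 3" by simp
  ultimately show ?thesis using partial_sum[of k n] assms by (simp add: T_def num_mult_nth)
qed


lemma comb_aux: "N \<ge> 2 \<Longrightarrow> \<forall>l\<in>{1..N}. real (s N l) = T N l"
proof (induction N rule: nat_induct_at_least)
  case base
  show ?case
  proof
    fix l :: nat assume l: "l \<in> {1..2}"
    have "s (Suc (Suc 0)) l = (\<Sum>j=1..Suc 0. s (Suc 0) j)" using l by (intro R1) auto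
    then have "s 2 l = 1" using s11 by (simp add: numeral_2_eq_2)
    moreover have "T 2 l = 1" using l S1 by (simp add: T_def)
    ultimately show "real (s 2 l) = T 2 l" by simp
  qed
next
  case (Suc N)
  define n where "n = N - 1"
  have N: "N = Suc n" "n \<ge> 1" using Suc.hyps by (auto simp: n_def)
  show ?case
  proof
    fix l assume l: "l \<in> {1..Suc N}"
    show "real (s (Suc N) l) = T (Suc N) l"
    proof (cases "l \<le> 3")
      case True
      have "s (Suc (Suc n)) l = (\<Sum>j=1..Suc n. s (Suc n) j)" using l True N by (intro R1) auto
      then have "real (s (Suc N) l) = (\<Sum>j=1..N. real (s N j))" using N by simp
      also have "\<dots> = (\<Sum>j=1..N. T N j)" using Suc.IH by (intro sum.cong) auto
      also have "\<dots> = Sf $ N" using Suc.hyps by (rule sumT)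
      also have "\<dots> = T (Suc N) l" using T_low[of "Suc N" l] l True Suc.hyps by simp
      finally show ?thesis .
    next
      case False
      have "s (Suc (Suc n)) l = (\<Sum>j=l..Suc n. s (Suc n) j) + 2 * s (Suc n) (l - 1)"
        using l False N by (intro R2) auto
      then have "real (s (Suc N) l) = (\<Sum>j=l..N. real (s N j)) + 2 * real (s N (l - 1))" using N by simp
      also have "\<dots> = (\<Sum>j=l..N. T N j) + 2 * T N (l - 1)"
      proof -
        have "l - 1 \<in> {1..N}" using l False by auto
        then have "real (s N (l - 1)) = T N (l - 1)" using Suc.IH by blast
        moreover have "(\<Sum>j=l..N. real (s N j)) = (\<Sum>j=l..N. T N j)"
          using Suc.IH l False by (intro sum.cong) auto
        ultimately show ?thesis by simp
      qed
      also have "\<dots> = T (n + 2) l" using T_rec[of l n] l False N by simp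
      finally show ?thesis using N by simp
    qed
  qed
qed

lemma comb: "n \<ge> 2 \<Longrightarrow> l \<in> {1..n} \<Longrightarrow> real (s n l) = T n l"
  using comb_aux by blast



definition cc :: "real \<Rightarrow> real poly fract" where "cc r = to_fract [:r:]"

lemma cc_add[simp]: "cc (a + b) = cc a + cc b" by (simp add: cc_def flip: to_fract_add to_fract_diff to_fract_mult)
lemma cc_diff[simp]: "cc (a - b) = cc a - cc b" by (simp add: cc_def flip: to_fract_add to_fract_diff to_fract_mult)
lemma cc_mult[simp]: "cc (a * b) = cc a * cc b" by (simp add: cc_def flip: to_fract_add to_fract_diff to_fract_mult)
lemma cc_0[simp]: "cc 0 = 0" by (simp add: cc_def flip: to_fract_add to_fract_diff to_fract_mult)
lemma cc_1[simp]: "cc 1 = 1" by (simp add: cc_def one_pCons[symmetric])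
lemma cc_sum[simp]: "cc (sum f A) = (\<Sum>x\<in>A. cc (f x))"
  by (induction A rule: infinite_finite_induct) auto
lemma cc_of_nat[simp]: "cc (of_nat k) = of_nat k"
  by (induction k) auto

definition iota :: "real fps \<Rightarrow> real poly fract fps" where
  "iota f = Abs_fps (\<lambda>n. cc (f $ n))"

lemma iota_nth[simp]: "iota f $ n = cc (f $ n)" by (simp add: iota_def)
lemma iota_add[simp]: "iota (f + g) = iota f + iota g" by (rule fps_ext) simp
lemma iota_diff[simp]: "iota (f - g) = iota f - iota g" by (rule fps_ext) simp
lemma iota_mult[simp]: "iota (f * g) = iota f * iota g" by (rule fps_ext) (simp add: fps_mult_nth)
lemma iota_1[simp]: "iota 1 = 1" by (rule fps_ext) simp
lemma iota_X[simp]: "iota fps_X = fps_X" by (rule fps_ext) (simp add: fps_X_def)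
lemma iota_power[simp]: "iota (f ^ k) = iota f ^ k" by (induction k) auto

definition SU where "SU = iota Sf"
definition VU where "VU = iota Vf"
abbreviation U where "U \<equiv> fps_const u_var"

lemma VU_eq: "VU = fps_X + SU" by (simp add: VU_def SU_def Vf_def)
lemma SU0: "SU $ 0 = 0" by (simp add: SU_def S0)
lemma VU0: "VU $ 0 = 0" by (simp add: VU_def V0)
lemma SU_rel: "SU ^ 2 = (1 - fps_X) * SU - fps_X"
proof -
  have "iota (Sf ^ 2) = iota ((1 - fps_X) * Sf - fps_X)" using S_rel by (rule arg_cong)
  then show ?thesis unfolding SU_def by simp
qed
lemma cc_2: "cc 2 = 2" by (metis cc_1 cc_add one_add_one)
lemma iota_2: "iota (2 * f) = 2 * iota f"
  by (rule fps_ext) (simp only: iota_nth num_mult_nth cc_mult cc_2)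

lemma sqrtu: "sqrt_fps_u = 1 - fps_X - 2 * SU"
proof -
  have "sqrt_fps_u = iota sqrt_fps" by (simp add: sqrt_fps_u_def iota_def cc_def)
  also have "\<dots> = iota (1 - fps_X - 2 * Sf)" using sqrt_eq by simp
  also have "\<dots> = 1 - fps_X - 2 * SU" by (simp only: iota_diff iota_1 iota_X iota_2 SU_def)
  finally show ?thesis .
qed

lemma T_iota: "cc (T N l) = (SU * VU ^ (l - 2)) $ (N - 1)"
proof -
  have "SU * VU ^ (l - 2) = iota (Sf * Vf ^ (l - 2))" by (simp add: SU_def VU_def)
  moreover have "cc (T N l) = iota (Sf * Vf ^ (l - 2)) $ (N - 1)" by (simp only: T_def iota_nth)
  ultimately show ?thesis by simp
qed



definition W where "W = U * VU"
definition G where "G = inverse (1 - W)"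
definition H where "H = fps_X * U * (1 + SU) + fps_X * U^2 * SU * G"

lemma W0: "W $ 0 = 0" by (simp add: W_def VU0)
lemma G_inv: "G * (1 - W) = 1" unfolding G_def by (rule inverse_mult_eq_1) (simp add: W0)

lemma G_split: "G = (\<Sum>i\<in>{0..<m}. W ^ i) + G * W ^ m"
proof -
  define P where "P = (\<Sum>i\<in>{0..<m}. W ^ i)"
  have p: "(1 - W) * P = 1 - W ^ m" using geo[of 0 m W] by (simp add: P_def)
  have "(1 - W) * (P + G * W ^ m) = (1 - W) * P + W ^ m * (G * (1 - W))" by (simp add: algebra_simps)
  also have "\<dots> = 1" using p G_inv by simp
  finally have e: "(1 - W) * (P + G * W ^ m) = 1" .
  have "G = G * ((1 - W) * (P + G * W ^ m))" using e by simp
  also have "\<dots> = (G * (1 - W)) * (P + G * W ^ m)" by (simp add: mult.assoc)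
  also have "\<dots> = P + G * W ^ m" using G_inv by simp
  finally show ?thesis by (simp add: P_def)
qed

lemma U2: "U ^ 2 = fps_const (u_var ^ 2)" by simp

lemma SUG_nth: "(SU * G) $ m = (\<Sum>i\<in>{0..<m}. u_var ^ i * (SU * VU ^ i) $ m)"
proof -
  have "SU * G = SU * ((\<Sum>i\<in>{0..<m}. W ^ i) + G * W ^ m)"
    using G_split[of m] by (rule arg_cong)
  also have "\<dots> = SU * (\<Sum>i\<in>{0..<m}. W ^ i) + SU ^ 1 * W ^ m * G" by (simp add: algebra_simps)
  finally have "SU * G = SU * (\<Sum>i\<in>{0..<m}. W ^ i) + SU ^ 1 * W ^ m * G" .
  moreover have "(SU ^ 1 * W ^ m * G) $ m = 0" using ord_lem[OF SU0 W0, of m 1 m G] by simp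
  moreover have "SU * (\<Sum>i\<in>{0..<m}. W ^ i) = (\<Sum>i\<in>{0..<m}. fps_const (u_var ^ i) * (SU * VU ^ i))"
    by (simp add: W_def sum_distrib_left power_mult_distrib fps_const_power algebra_simps)
  ultimately show ?thesis by (simp add: fps_sum_nth)
qed

lemma h_eq_H: "h_fps = H"
proof (rule fps_ext)
  fix n
  define F where "F = U * (1 + SU) + U^2 * SU * G"
  have HF: "H = fps_X * F" by (simp add: H_def F_def algebra_simps)
  have Fnth: "F $ m = u_var * (1 + SU) $ m + u_var ^ 2 * (SU * G) $ m" for m
    by (simp add: F_def U2 mult.assoc del: fps_const_power)
  show "h_fps $ n = H $ n"
  proof (cases "n \<le> 1")
    case True
    then consider "n = 0" | "n = 1" by linarith
    then show ?thesis
    proof cases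
      case 1 then show ?thesis by (simp add: h_fps_def HF)
    next
      case 2
      have "s (Suc 0) (Suc 0) = Suc 0" using s11 by simp
      with 2 show ?thesis by (simp add: h_fps_def HF Fnth SU0)
    qed
  next
    case False
    then have n: "n \<ge> 2" by simp
    have sl: "of_nat (s n l) = (SU * VU ^ (l - 2)) $ (n - 1)" if "l \<in> {1..n}" for l
    proof -
      have "(of_nat (s n l) :: real poly fract) = cc (real (s n l))" by simp
      also have "\<dots> = cc (T n l)" using comb[OF n that] by simp
      finally show ?thesis using T_iota by simp
    qed
    have "h_fps $ n = (\<Sum>l=1..n. (SU * VU ^ (l - 2)) $ (n - 1) * u_var ^ l)"
      by (simp add: h_fps_def sl)
    also have "\<dots> = SU $ (n - 1) * u_var + (\<Sum>l=2..n. (SU * VU ^ (l - 2)) $ (n - 1) * u_var ^ l)"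
      using n by (simp add: sum.atLeast_Suc_atMost numeral_2_eq_2)
    also have "(\<Sum>l=2..n. (SU * VU ^ (l - 2)) $ (n - 1) * u_var ^ l)
        = (\<Sum>i\<in>{0..<n-1}. (SU * VU ^ i) $ (n - 1) * u_var ^ (i + 2))"
      using sum_shift2[where k=2 and n="n - 1" and g="\<lambda>l. (SU * VU ^ (l - 2)) $ (n - 1) * u_var ^ l"] n by simp
    also have "\<dots> = u_var ^ 2 * (\<Sum>i\<in>{0..<n-1}. u_var ^ i * (SU * VU ^ i) $ (n - 1))"
      by (simp add: sum_distrib_left power_add power2_eq_square mult_ac)
    also have "\<dots> = u_var ^ 2 * (SU * G) $ (n - 1)"
      by (simp only: SUG_nth)
    finally have "h_fps $ n = SU $ (n - 1) * u_var + u_var ^ 2 * (SU * G) $ (n - 1)" .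
    moreover have "H $ n = F $ (n - 1)" using n by (simp add: HF)
    moreover have "(1 + SU) $ (n - 1) = SU $ (n - 1)" using n by simp
    ultimately show ?thesis using Fnth by (simp add: algebra_simps)
  qed
qed

lemma alg1: fixes u x s :: "'a::comm_ring_1"
  shows "(1 - u + u*s)*(1 - u*(x+s)) - (1 - u*(1+x) + 2*u^2*x) = -(u^2*(s^2 - ((1-x)*s - x)))"
  by (simp add: algebra_simps power2_eq_square)

lemma alg2: fixes u x s :: "'a::comm_ring_1"
  shows "2*x*u*((1+s)*(1 - u*(1+x) + 2*u^2*x) + u*s*(1-u+u*s))
     - (2*u*x*(1-u)*(1-u*x) + u*x*(1-u*(1-u)*x)*(2*s)) = 2*x*u*u^2*(s^2 - ((1-x)*s - x))"
  by (simp add: algebra_simps power2_eq_square)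

lemma alg3: fixes u x s g k :: "'a::comm_ring_1"
  shows "(x*u*(1+s) + x*u^2*s*g) * (2*k) = 2*x*u*((1+s)*k + u*s*(k*g))"
  by (simp add: algebra_simps power2_eq_square)

definition K where "K = 1 - U * (1 + fps_X) + 2 * U ^ 2 * fps_X"

lemma K_fact: "K = (1 - U + U * SU) * (1 - W)"
proof -
  have "(1 - U + U * SU) * (1 - W) - K = - (U ^ 2 * (SU ^ 2 - ((1 - fps_X) * SU - fps_X)))"
    unfolding K_def W_def VU_eq by (rule alg1)
  then show ?thesis using SU_rel by simp
qed

lemma KG: "K * G = 1 - U + U * SU"
proof -
  have "K * G = (1 - U + U * SU) * (G * (1 - W))" by (simp add: K_fact algebra_simps)
  then show ?thesis using G_inv by simp
qed

lemma HD: "H * (2 * K) =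
      2 * U * fps_X * (1 - U) * (1 - U * fps_X)
       + U * fps_X * (1 - U * (1 - U) * fps_X) * (1 - fps_X - sqrt_fps_u)"
proof -
  have "H * (2 * K) = 2 * fps_X * U * ((1 + SU) * K + U * SU * (K * G))"
    unfolding H_def by (rule alg3)
  also have "\<dots> = 2 * fps_X * U * ((1 + SU) * K + U * SU * (1 - U + U * SU))" by (simp add: KG)
  finally have l: "H * (2 * K) = 2 * fps_X * U * ((1 + SU) * K + U * SU * (1 - U + U * SU))" .
  have r: "1 - fps_X - sqrt_fps_u = 2 * SU" by (simp add: sqrtu)
  have "2 * fps_X * U * ((1 + SU) * K + U * SU * (1 - U + U * SU))
      - (2 * U * fps_X * (1 - U) * (1 - U * fps_X) + U * fps_X * (1 - U * (1 - U) * fps_X) * (2 * SU))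
      = 2 * fps_X * U * U ^ 2 * (SU ^ 2 - ((1 - fps_X) * SU - fps_X))"
    unfolding K_def by (rule alg2)
  then show ?thesis using SU_rel l r by simp
qed

lemma u_ne1: "u_var \<noteq> 1"
proof
  assume "u_var = 1"
  then have "to_fract [:0, 1:] = (to_fract 1 :: real poly fract)" by (simp add: u_var_def)
  then have "[:0, 1::real:] = 1" by (simp only: to_fract_eq_iff)
  then show False by (simp add: one_pCons)
qed

lemma two_ne0: "(2 :: real poly fract) \<noteq> 0"
  by (metis cc_2 cc_def to_fract_eq_0_iff pCons_eq_0_iff zero_neq_numeral)

lemma part1: "h_fps =
      (2 * fps_const u_var * fps_X * (1 - fps_const u_var) * (1 - fps_const u_var * fps_X)
       + fps_const u_var * fps_X * (1 - fps_const u_var * (1 - fps_const u_var) * fps_X)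
           * (1 - fps_X - sqrt_fps_u))
      / (2 * (1 - fps_const u_var * (1 + fps_X) + 2 * fps_const u_var ^ 2 * fps_X))"
proof -
  have D0: "(2 * K) $ 0 \<noteq> 0"
    using u_ne1 two_ne0 by (simp add: K_def num_mult_nth)
  have "H = H * ((2 * K) * inverse (2 * K))" using inverse_mult_eq_1'[OF D0] by simp
  also have "\<dots> = (H * (2 * K)) * inverse (2 * K)" by (simp add: mult.assoc)
  finally have "H = (2 * U * fps_X * (1 - U) * (1 - U * fps_X)
       + U * fps_X * (1 - U * (1 - U) * fps_X) * (1 - fps_X - sqrt_fps_u)) / (2 * K)"
    using HD fps_divide_unit[OF D0] by simp
  then show ?thesis using h_eq_H by (simp add: K_def)
qed


lemma part2: "Abs_fps (\<lambda>n. \<Sum>l=1..n. real (s n l)) = (1 - fps_X - sqrt_fps) / 2"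
proof (rule fps_ext)
  fix n
  have "(\<Sum>l=1..n. real (s n l)) = Sf $ n"
  proof (cases "n \<le> 1")
    case True
    then consider "n = 0" | "n = 1" by linarith
    moreover have "s (Suc 0) (Suc 0) = 1" "Sf $ Suc 0 = 1" using s11 S1 by simp_all
    ultimately show ?thesis by cases (simp_all add: S0)
  next
    case False
    then have "(\<Sum>l=1..n. real (s n l)) = (\<Sum>l=1..n. T n l)" by (intro sum.cong) (auto simp: comb)
    also have "\<dots> = Sf $ n" using False by (intro sumT) auto
    finally show ?thesis .
  qed
  then show "Abs_fps (\<lambda>n. \<Sum>l=1..n. real (s n l)) $ n = ((1 - fps_X - sqrt_fps) / 2) $ n"
    by (simp add: Sf_def)
qed

theorem corollary5p3:
  shows "(h_fps =
      (2 * fps_const u_var * fps_X * (1 - fps_const u_var) * (1 - fps_const u_var * fps_X)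
       + fps_const u_var * fps_X * (1 - fps_const u_var * (1 - fps_const u_var) * fps_X)
           * (1 - fps_X - sqrt_fps_u))
      / (2 * (1 - fps_const u_var * (1 + fps_X) + 2 * fps_const u_var ^ 2 * fps_X)))
    \<and> (Abs_fps (\<lambda>n. \<Sum>l=1..n. real (s n l)) = (1 - fps_X - sqrt_fps) / 2)
    \<and> (\<forall>n\<ge>1. real (card (av_perms n)) = ((1 - fps_X - sqrt_fps) / 2) $ n)"
proof (intro conjI allI impI)
  show "h_fps =
      (2 * fps_const u_var * fps_X * (1 - fps_const u_var) * (1 - fps_const u_var * fps_X)
       + fps_const u_var * fps_X * (1 - fps_const u_var * (1 - fps_const u_var) * fps_X)
           * (1 - fps_X - sqrt_fps_u))
      / (2 * (1 - fps_const u_var * (1 + fps_X) + 2 * fps_const u_var ^ 2 * fps_X))"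
    by (rule part1)
  show "Abs_fps (\<lambda>n. \<Sum>l=1..n. real (s n l)) = (1 - fps_X - sqrt_fps) / 2" by (rule part2)
  fix n :: nat assume n: "1 \<le> n"
  have "real (card (av_perms n)) = (\<Sum>l=1..n. real (s n l))" using card_av[OF n] by simp
  also have "\<dots> = Abs_fps (\<lambda>n. \<Sum>l=1..n. real (s n l)) $ n" by simp
  also have "\<dots> = ((1 - fps_X - sqrt_fps) / 2) $ n" by (simp only: part2)
  finally show "real (card (av_perms n)) = ((1 - fps_X - sqrt_fps) / 2) $ n" .
qed

end
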